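(* Let $R$ be a commutative ring with nonzero identity, $S$ a multiplicatively closed subset of $R$, and $\delta$ an expansion of ideals of $R$; let $\delta_S$ be the expansion of ideals of $S^{-1}R$ given by $\delta_S(S^{-1}I)=S^{-1}(\delta(I))$. Let $I$ be an ideal of $R$. (1) If $I$ is a $\delta$-$n$-ideal of $R$ with $I\cap S=\emptyset$, then $S^{-1}I$ is a $\delta_S$-$n$-ideal of $S^{-1}R$. (2) If $S\cap Z(R)=S\cap Z_{\delta(I)}(R)=\emptyset$ and $S^{-1}I$ is a $\delta_S$-$n$-ideal of $S^{-1}R$, then $I$ is a $\delta$-$n$-ideal of $R$.
   Context: An expansion of ideals of a ring $R$ is a map $\delta$ from the set of ideals of $R$ to itself such that $I\subseteq\delta(I)$ for every ideal $I$, and $\delta(I)\subseteq\delta(J)$ whenever $I\subseteq J$. $\sqrt{0}$ denotes the nilradical of the ring in question. Given an expansion $\delta$ of ideals of a ring $R$, a proper ideal $I$ of $R$ is a $\delta$-$n$-ideal if whenever $a,b\in R$ with $ab\in I$ and $a\notin\sqrt{0}$, then $b\in\delta(I)$. $Z(R)$ denotes the set of zero-divisors of $R$, and for a proper ideal $J$ of $R$, $Z_J(R)=\{r\in R: rs\in J \text{ for some } s\in R\setminus J\}$. *)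

theory Defs
  imports "HOL-Algebra.Algebra"
begin

definition mult_closed :: "('a, 'b) ring_scheme \<Rightarrow> 'a set \<Rightarrow> bool" where
  "mult_closed R S \<longleftrightarrow> S \<subseteq> carrier R \<and> \<one>\<^bsub>R\<^esub> \<in> S \<and>
     (\<forall>s\<in>S. \<forall>t\<in>S. s \<otimes>\<^bsub>R\<^esub> t \<in> S)"

definition loc_rel :: "('a, 'b) ring_scheme \<Rightarrow> 'a set \<Rightarrow> (('a \<times> 'a) \<times> ('a \<times> 'a)) set" where
  "loc_rel R S = {((a, s), (b, t)). a \<in> carrier R \<and> b \<in> carrier R \<and> s \<in> S \<and> t \<in> S \<and>
     (\<exists>u\<in>S. u \<otimes>\<^bsub>R\<^esub> ((t \<otimes>\<^bsub>R\<^esub> a) \<ominus>\<^bsub>R\<^esub> (s \<otimes>\<^bsub>R\<^esub> b)) = \<zero>\<^bsub>R\<^esub>)}"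

definition frac :: "('a, 'b) ring_scheme \<Rightarrow> 'a set \<Rightarrow> 'a \<Rightarrow> 'a \<Rightarrow> ('a \<times> 'a) set" where
  "frac R S a s = loc_rel R S `` {(a, s)}"

definition loc_add :: "('a, 'b) ring_scheme \<Rightarrow> 'a set \<Rightarrow> ('a \<times> 'a) set \<Rightarrow> ('a \<times> 'a) set \<Rightarrow> ('a \<times> 'a) set" where
  "loc_add R S U V = the_elem {z. \<exists>a s b t. (a, s) \<in> U \<and> (b, t) \<in> V \<and>
      z = frac R S ((a \<otimes>\<^bsub>R\<^esub> t) \<oplus>\<^bsub>R\<^esub> (b \<otimes>\<^bsub>R\<^esub> s)) (s \<otimes>\<^bsub>R\<^esub> t)}"

definition loc_mult :: "('a, 'b) ring_scheme \<Rightarrow> 'a set \<Rightarrow> ('a \<times> 'a) set \<Rightarrow> ('a \<times> 'a) set \<Rightarrow> ('a \<times> 'a) set" where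
  "loc_mult R S U V = the_elem {z. \<exists>a s b t. (a, s) \<in> U \<and> (b, t) \<in> V \<and>
      z = frac R S (a \<otimes>\<^bsub>R\<^esub> b) (s \<otimes>\<^bsub>R\<^esub> t)}"

definition Loc :: "('a, 'b) ring_scheme \<Rightarrow> 'a set \<Rightarrow> ('a \<times> 'a) set ring" where
  "Loc R S = \<lparr> Congruence.partial_object.carrier = (carrier R \<times> S) // loc_rel R S,
              Group.monoid.mult = loc_mult R S,
              Group.monoid.one = frac R S (\<one>\<^bsub>R\<^esub>) (\<one>\<^bsub>R\<^esub>),
              Ring.ring.zero = frac R S (\<zero>\<^bsub>R\<^esub>) (\<one>\<^bsub>R\<^esub>),
              Ring.ring.add = loc_add R S \<rparr>"

definition loc_ideal :: "('a, 'b) ring_scheme \<Rightarrow> 'a set \<Rightarrow> 'a set \<Rightarrow> ('a \<times> 'a) set set" where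
  "loc_ideal R S I = {frac R S a s | a s. a \<in> I \<and> s \<in> S}"

definition nilrad :: "('a, 'b) ring_scheme \<Rightarrow> 'a set" where
  "nilrad R = {a \<in> carrier R. \<exists>n::nat. a [^]\<^bsub>R\<^esub> n = \<zero>\<^bsub>R\<^esub>}"

definition expansion :: "('a, 'b) ring_scheme \<Rightarrow> ('a set \<Rightarrow> 'a set) \<Rightarrow> bool" where
  "expansion R \<delta> \<longleftrightarrow>
     (\<forall>I. ideal I R \<longrightarrow> ideal (\<delta> I) R \<and> I \<subseteq> \<delta> I) \<and>
     (\<forall>I J. ideal I R \<longrightarrow> ideal J R \<longrightarrow> I \<subseteq> J \<longrightarrow> \<delta> I \<subseteq> \<delta> J)"

definition delta_n_ideal :: "('a, 'b) ring_scheme \<Rightarrow> ('a set \<Rightarrow> 'a set) \<Rightarrow> 'a set \<Rightarrow> bool" where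
  "delta_n_ideal R \<delta> I \<longleftrightarrow> ideal I R \<and> I \<noteq> carrier R \<and>
     (\<forall>a\<in>carrier R. \<forall>b\<in>carrier R. a \<otimes>\<^bsub>R\<^esub> b \<in> I \<longrightarrow> a \<notin> nilrad R \<longrightarrow> b \<in> \<delta> I)"

text \<open>Zero-divisors Z(R) (0 counts as a zero-divisor in a nonzero ring).\<close>
definition zero_divs :: "('a, 'b) ring_scheme \<Rightarrow> 'a set" where
  "zero_divs R = {r \<in> carrier R. \<exists>s\<in>carrier R. s \<noteq> \<zero>\<^bsub>R\<^esub> \<and> r \<otimes>\<^bsub>R\<^esub> s = \<zero>\<^bsub>R\<^esub>}"

definition zero_divs_mod :: "('a, 'b) ring_scheme \<Rightarrow> 'a set \<Rightarrow> 'a set" where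
  "zero_divs_mod R J = {r \<in> carrier R. \<exists>s\<in>carrier R - J. r \<otimes>\<^bsub>R\<^esub> s \<in> J}"

end

theory Submission
  imports Defs
begin

locale lctx = cring R for R (structure) + fixes S assumes mc: "mult_closed R S"
begin

lemma S_carr: "s \<in> S \<Longrightarrow> s \<in> carrier R" using mc by (auto simp: mult_closed_def)
lemma one_S: "\<one> \<in> S" using mc by (simp add: mult_closed_def)
lemma S_mult: "s \<in> S \<Longrightarrow> t \<in> S \<Longrightarrow> s \<otimes> t \<in> S" using mc by (simp add: mult_closed_def)

lemma rel_iff: "((a,s),(b,t)) \<in> loc_rel R S \<longleftrightarrow> a \<in> carrier R \<and> b \<in> carrier R \<and> s \<in> S \<and> t \<in> S \<and>
   (\<exists>u\<in>S. u \<otimes> ((t \<otimes> a) \<ominus> (s \<otimes> b)) = \<zero>)"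
  by (simp add: loc_rel_def)

lemma rel_eqI: "a \<in> carrier R \<Longrightarrow> b \<in> carrier R \<Longrightarrow> s \<in> S \<Longrightarrow> t \<in> S \<Longrightarrow> t \<otimes> a = s \<otimes> b
  \<Longrightarrow> ((a,s),(b,t)) \<in> loc_rel R S"
  unfolding rel_iff using one_S S_carr by (intro conjI bexI[of _ \<one>]) (auto)

lemma rel_refl: "a \<in> carrier R \<Longrightarrow> s \<in> S \<Longrightarrow> ((a,s),(a,s)) \<in> loc_rel R S"
  by (rule rel_eqI) (auto simp: S_carr m_comm)

lemma rel_sym: "((a,s),(b,t)) \<in> loc_rel R S \<Longrightarrow> ((b,t),(a,s)) \<in> loc_rel R S"
proof -
  assume "((a,s),(b,t)) \<in> loc_rel R S"
  then obtain u where h: "a \<in> carrier R" "b \<in> carrier R" "s \<in> S" "t \<in> S" "u \<in> S"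
     "u \<otimes> ((t \<otimes> a) \<ominus> (s \<otimes> b)) = \<zero>" unfolding rel_iff by blast
  have c: "s \<in> carrier R" "t \<in> carrier R" "u \<in> carrier R" using h S_carr by auto
  have "u \<otimes> ((s \<otimes> b) \<ominus> (t \<otimes> a)) = \<ominus> (u \<otimes> ((t \<otimes> a) \<ominus> (s \<otimes> b)))"
    using h(1,2) c by algebra
  also have "\<dots> = \<zero>" using h by simp
  finally show ?thesis unfolding rel_iff using h by blast
qed

lemma rel_trans: "((a,s),(b,t)) \<in> loc_rel R S \<Longrightarrow> ((b,t),(c,r)) \<in> loc_rel R S \<Longrightarrow> ((a,s),(c,r)) \<in> loc_rel R S"
proof -
  assume "((a,s),(b,t)) \<in> loc_rel R S" "((b,t),(c,r)) \<in> loc_rel R S"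
  then obtain u v where h: "a \<in> carrier R" "b \<in> carrier R" "c \<in> carrier R" "s \<in> S" "t \<in> S" "r \<in> S" "u \<in> S" "v \<in> S"
     "u \<otimes> ((t \<otimes> a) \<ominus> (s \<otimes> b)) = \<zero>" "v \<otimes> ((r \<otimes> b) \<ominus> (t \<otimes> c)) = \<zero>" unfolding rel_iff by blast
  have cc: "s \<in> carrier R" "t \<in> carrier R" "u \<in> carrier R" "v \<in> carrier R" "r \<in> carrier R" using h S_carr by auto
  have "(u \<otimes> v \<otimes> t) \<otimes> ((r \<otimes> a) \<ominus> (s \<otimes> c)) = (v \<otimes> r) \<otimes> (u \<otimes> ((t \<otimes> a) \<ominus> (s \<otimes> b))) \<oplus> (u \<otimes> s) \<otimes> (v \<otimes> ((r \<otimes> b) \<ominus> (t \<otimes> c)))"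
    using h(1-3) cc by algebra
  also have "\<dots> = \<zero>" using h cc by simp
  finally have "(u \<otimes> v \<otimes> t) \<otimes> ((r \<otimes> a) \<ominus> (s \<otimes> c)) = \<zero>" .
  moreover have "u \<otimes> v \<otimes> t \<in> S" using h S_mult by auto
  ultimately show ?thesis unfolding rel_iff using h by blast
qed

lemma rel_equiv: "equiv (carrier R \<times> S) (loc_rel R S)"
proof (rule equivI)
  show "loc_rel R S \<subseteq> (carrier R \<times> S) \<times> (carrier R \<times> S)" by (auto simp: loc_rel_def)
  show "refl_on (carrier R \<times> S) (loc_rel R S)" by (auto simp: refl_on_def intro: rel_refl)
  show "sym (loc_rel R S)" by (auto simp: sym_def intro: rel_sym)
  show "trans (loc_rel R S)" unfolding trans_def by (auto intro: rel_trans)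
qed

lemma frac_eq: "a \<in> carrier R \<Longrightarrow> b \<in> carrier R \<Longrightarrow> s \<in> S \<Longrightarrow> t \<in> S \<Longrightarrow>
  frac R S a s = frac R S b t \<longleftrightarrow> ((a,s),(b,t)) \<in> loc_rel R S"
  unfolding frac_def by (rule eq_equiv_class_iff[OF rel_equiv]) auto

lemma frac_eqI: "a \<in> carrier R \<Longrightarrow> b \<in> carrier R \<Longrightarrow> s \<in> S \<Longrightarrow> t \<in> S \<Longrightarrow> t \<otimes> a = s \<otimes> b
  \<Longrightarrow> frac R S a s = frac R S b t"
  by (simp add: frac_eq rel_eqI)

lemma mem_frac: "(x, y) \<in> frac R S a s \<longleftrightarrow> ((a,s),(x,y)) \<in> loc_rel R S"
  by (simp add: frac_def)

lemma Loc_carrier: "carrier (Loc R S) = {frac R S a s | a s. a \<in> carrier R \<and> s \<in> S}"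
  by (auto simp: Loc_def quotient_def frac_def)

lemma Loc_carrierE: "x \<in> carrier (Loc R S) \<Longrightarrow> (\<And>a s. a \<in> carrier R \<Longrightarrow> s \<in> S \<Longrightarrow> x = frac R S a s \<Longrightarrow> P) \<Longrightarrow> P"
  unfolding Loc_carrier by blast

lemma frac_carrier: "a \<in> carrier R \<Longrightarrow> s \<in> S \<Longrightarrow> frac R S a s \<in> carrier (Loc R S)"
  unfolding Loc_carrier by blast

lemma mult_compat: "((a,s),(a',s')) \<in> loc_rel R S \<Longrightarrow> ((b,t),(b',t')) \<in> loc_rel R S \<Longrightarrow>
   ((a \<otimes> b, s \<otimes> t),(a' \<otimes> b', s' \<otimes> t')) \<in> loc_rel R S"
proof -
  assume "((a,s),(a',s')) \<in> loc_rel R S" "((b,t),(b',t')) \<in> loc_rel R S"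
  then obtain u v where h: "a \<in> carrier R" "a' \<in> carrier R" "b \<in> carrier R" "b' \<in> carrier R"
     "s \<in> S" "s' \<in> S" "t \<in> S" "t' \<in> S" "u \<in> S" "v \<in> S"
     "u \<otimes> ((s' \<otimes> a) \<ominus> (s \<otimes> a')) = \<zero>" "v \<otimes> ((t' \<otimes> b) \<ominus> (t \<otimes> b')) = \<zero>" unfolding rel_iff by blast
  have cc: "s \<in> carrier R" "t \<in> carrier R" "u \<in> carrier R" "v \<in> carrier R" "s' \<in> carrier R" "t' \<in> carrier R" using h S_carr by auto
  have "(u \<otimes> v) \<otimes> (((s' \<otimes> t') \<otimes> (a \<otimes> b)) \<ominus> ((s \<otimes> t) \<otimes> (a' \<otimes> b'))) = (v \<otimes> t' \<otimes> b) \<otimes> (u \<otimes> ((s' \<otimes> a) \<ominus> (s \<otimes> a'))) \<oplus> (u \<otimes> s \<otimes> a') \<otimes> (v \<otimes> ((t' \<otimes> b) \<ominus> (t \<otimes> b')))"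
    using h(1-4) cc by algebra
  also have "\<dots> = \<zero>" using h cc by simp
  finally have "(u \<otimes> v) \<otimes> (((s' \<otimes> t') \<otimes> (a \<otimes> b)) \<ominus> ((s \<otimes> t) \<otimes> (a' \<otimes> b'))) = \<zero>" .
  moreover have "u \<otimes> v \<in> S" using h S_mult by auto
  ultimately show ?thesis unfolding rel_iff using h S_mult by blast
qed

lemma add_compat: "((a,s),(a',s')) \<in> loc_rel R S \<Longrightarrow> ((b,t),(b',t')) \<in> loc_rel R S \<Longrightarrow>
   ((a \<otimes> t \<oplus> b \<otimes> s, s \<otimes> t),(a' \<otimes> t' \<oplus> b' \<otimes> s', s' \<otimes> t')) \<in> loc_rel R S"
proof -
  assume "((a,s),(a',s')) \<in> loc_rel R S" "((b,t),(b',t')) \<in> loc_rel R S"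
  then obtain u v where h: "a \<in> carrier R" "a' \<in> carrier R" "b \<in> carrier R" "b' \<in> carrier R"
     "s \<in> S" "s' \<in> S" "t \<in> S" "t' \<in> S" "u \<in> S" "v \<in> S"
     "u \<otimes> ((s' \<otimes> a) \<ominus> (s \<otimes> a')) = \<zero>" "v \<otimes> ((t' \<otimes> b) \<ominus> (t \<otimes> b')) = \<zero>" unfolding rel_iff by blast
  have cc: "s \<in> carrier R" "t \<in> carrier R" "u \<in> carrier R" "v \<in> carrier R" "s' \<in> carrier R" "t' \<in> carrier R" using h S_carr by auto
  have "(u \<otimes> v) \<otimes> (((s' \<otimes> t') \<otimes> (a \<otimes> t \<oplus> b \<otimes> s)) \<ominus> ((s \<otimes> t) \<otimes> (a' \<otimes> t' \<oplus> b' \<otimes> s'))) = (v \<otimes> t \<otimes> t') \<otimes> (u \<otimes> ((s' \<otimes> a) \<ominus> (s \<otimes> a'))) \<oplus> (u \<otimes> s \<otimes> s') \<otimes> (v \<otimes> ((t' \<otimes> b) \<ominus> (t \<otimes> b')))"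
    using h(1-4) cc by algebra
  also have "\<dots> = \<zero>" using h cc by simp
  finally have "(u \<otimes> v) \<otimes> (((s' \<otimes> t') \<otimes> (a \<otimes> t \<oplus> b \<otimes> s)) \<ominus> ((s \<otimes> t) \<otimes> (a' \<otimes> t' \<oplus> b' \<otimes> s'))) = \<zero>" .
  moreover have "u \<otimes> v \<in> S" using h S_mult by auto
  ultimately show ?thesis unfolding rel_iff using h S_mult cc by auto
qed

lemma loc_mult_frac: "a \<in> carrier R \<Longrightarrow> b \<in> carrier R \<Longrightarrow> s \<in> S \<Longrightarrow> t \<in> S \<Longrightarrow>
  loc_mult R S (frac R S a s) (frac R S b t) = frac R S (a \<otimes> b) (s \<otimes> t)"
proof -
  assume h: "a \<in> carrier R" "b \<in> carrier R" "s \<in> S" "t \<in> S"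
  have "{z. \<exists>a' s' b' t'. (a', s') \<in> frac R S a s \<and> (b', t') \<in> frac R S b t \<and>
      z = frac R S (a' \<otimes> b') (s' \<otimes> t')} = {frac R S (a \<otimes> b) (s \<otimes> t)}"
  proof (intro equalityI subsetI)
    fix z assume "z \<in> {z. \<exists>a' s' b' t'. (a', s') \<in> frac R S a s \<and> (b', t') \<in> frac R S b t \<and>
      z = frac R S (a' \<otimes> b') (s' \<otimes> t')}"
    then obtain a' s' b' t' where z: "((a,s),(a',s')) \<in> loc_rel R S" "((b,t),(b',t')) \<in> loc_rel R S"
      "z = frac R S (a' \<otimes> b') (s' \<otimes> t')" unfolding mem_frac by blast
    have "((a \<otimes> b, s \<otimes> t),(a' \<otimes> b', s' \<otimes> t')) \<in> loc_rel R S" by (rule mult_compat[OF z(1,2)])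
    then have "frac R S (a \<otimes> b) (s \<otimes> t) = frac R S (a' \<otimes> b') (s' \<otimes> t')"
      unfolding frac_def by (rule equiv_class_eq[OF rel_equiv])
    then show "z \<in> {frac R S (a \<otimes> b) (s \<otimes> t)}" using z by simp
  next
    fix z assume "z \<in> {frac R S (a \<otimes> b) (s \<otimes> t)}"
    then show "z \<in> {z. \<exists>a' s' b' t'. (a', s') \<in> frac R S a s \<and> (b', t') \<in> frac R S b t \<and>
      z = frac R S (a' \<otimes> b') (s' \<otimes> t')}" using h rel_refl unfolding mem_frac by blast
  qed
  then show ?thesis unfolding loc_mult_def by simp
qed

lemma loc_add_frac: "a \<in> carrier R \<Longrightarrow> b \<in> carrier R \<Longrightarrow> s \<in> S \<Longrightarrow> t \<in> S \<Longrightarrow>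
  loc_add R S (frac R S a s) (frac R S b t) = frac R S (a \<otimes> t \<oplus> b \<otimes> s) (s \<otimes> t)"
proof -
  assume h: "a \<in> carrier R" "b \<in> carrier R" "s \<in> S" "t \<in> S"
  have "{z. \<exists>a' s' b' t'. (a', s') \<in> frac R S a s \<and> (b', t') \<in> frac R S b t \<and>
      z = frac R S (a' \<otimes> t' \<oplus> b' \<otimes> s') (s' \<otimes> t')} = {frac R S (a \<otimes> t \<oplus> b \<otimes> s) (s \<otimes> t)}"
  proof (intro equalityI subsetI)
    fix z assume "z \<in> {z. \<exists>a' s' b' t'. (a', s') \<in> frac R S a s \<and> (b', t') \<in> frac R S b t \<and>
      z = frac R S (a' \<otimes> t' \<oplus> b' \<otimes> s') (s' \<otimes> t')}"
    then obtain a' s' b' t' where z: "((a,s),(a',s')) \<in> loc_rel R S" "((b,t),(b',t')) \<in> loc_rel R S"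
      "z = frac R S (a' \<otimes> t' \<oplus> b' \<otimes> s') (s' \<otimes> t')" unfolding mem_frac by blast
    have "((a \<otimes> t \<oplus> b \<otimes> s, s \<otimes> t),(a' \<otimes> t' \<oplus> b' \<otimes> s', s' \<otimes> t')) \<in> loc_rel R S" by (rule add_compat[OF z(1,2)])
    then have "frac R S (a \<otimes> t \<oplus> b \<otimes> s) (s \<otimes> t) = frac R S (a' \<otimes> t' \<oplus> b' \<otimes> s') (s' \<otimes> t')"
      unfolding frac_def by (rule equiv_class_eq[OF rel_equiv])
    then show "z \<in> {frac R S (a \<otimes> t \<oplus> b \<otimes> s) (s \<otimes> t)}" using z by simp
  next
    fix z assume "z \<in> {frac R S (a \<otimes> t \<oplus> b \<otimes> s) (s \<otimes> t)}"
    then show "z \<in> {z. \<exists>a' s' b' t'. (a', s') \<in> frac R S a s \<and> (b', t') \<in> frac R S b t \<and>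
      z = frac R S (a' \<otimes> t' \<oplus> b' \<otimes> s') (s' \<otimes> t')}" using h rel_refl unfolding mem_frac by blast
  qed
  then show ?thesis unfolding loc_add_def by simp
qed


lemma Loc_simps: "Group.monoid.mult (Loc R S) = loc_mult R S" "Ring.ring.add (Loc R S) = loc_add R S"
  "Group.monoid.one (Loc R S) = frac R S \<one> \<one>" "Ring.ring.zero (Loc R S) = frac R S \<zero> \<one>"
  by (simp_all add: Loc_def)


lemma f_add_assoc: assumes "a \<in> carrier R" "b \<in> carrier R" "c \<in> carrier R" "s \<in> S" "t \<in> S" "r \<in> S"
  shows "loc_add R S (loc_add R S (frac R S a s) (frac R S b t)) (frac R S c r) = loc_add R S (frac R S a s) (loc_add R S (frac R S b t) (frac R S c r))"
proof -
  have c: "s \<in> carrier R" "t \<in> carrier R" "r \<in> carrier R" using assms S_carr by auto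
  show ?thesis using assms c one_S
  apply (simp add: loc_add_frac loc_mult_frac S_mult S_carr)
  apply (rule frac_eqI)
  apply (simp add: S_mult S_carr; fail)+
  apply (insert c assms(1-2))
  apply algebra
  done
qed

lemma f_mult_assoc: assumes "a \<in> carrier R" "b \<in> carrier R" "c \<in> carrier R" "s \<in> S" "t \<in> S" "r \<in> S"
  shows "loc_mult R S (loc_mult R S (frac R S a s) (frac R S b t)) (frac R S c r) = loc_mult R S (frac R S a s) (loc_mult R S (frac R S b t) (frac R S c r))"
proof -
  have c: "s \<in> carrier R" "t \<in> carrier R" "r \<in> carrier R" using assms S_carr by auto
  show ?thesis using assms c one_S
  apply (simp add: loc_add_frac loc_mult_frac S_mult S_carr)
  apply (rule frac_eqI)
  apply (simp add: S_mult S_carr; fail)+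
  apply (insert c assms(1-2))
  apply algebra
  done
qed

lemma f_distr: assumes "a \<in> carrier R" "b \<in> carrier R" "c \<in> carrier R" "s \<in> S" "t \<in> S" "r \<in> S"
  shows "loc_mult R S (loc_add R S (frac R S a s) (frac R S b t)) (frac R S c r) = loc_add R S (loc_mult R S (frac R S a s) (frac R S c r)) (loc_mult R S (frac R S b t) (frac R S c r))"
proof -
  have c: "s \<in> carrier R" "t \<in> carrier R" "r \<in> carrier R" using assms S_carr by auto
  show ?thesis using assms c one_S
  apply (simp add: loc_add_frac loc_mult_frac S_mult S_carr)
  apply (rule frac_eqI)
  apply (simp add: S_mult S_carr; fail)+
  apply (insert c assms(1-2))
  apply algebra
  done
qed

lemma f_add_comm: assumes "a \<in> carrier R" "b \<in> carrier R" "s \<in> S" "t \<in> S"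
  shows "loc_add R S (frac R S a s) (frac R S b t) = loc_add R S (frac R S b t) (frac R S a s)"
proof -
  have c: "s \<in> carrier R" "t \<in> carrier R" using assms S_carr by auto
  show ?thesis using assms c one_S
  apply (simp add: loc_add_frac loc_mult_frac S_mult S_carr)
  apply (rule frac_eqI)
  apply (simp add: S_mult S_carr; fail)+
  apply (insert c assms(1-2))
  apply algebra
  done
qed

lemma f_mult_comm: assumes "a \<in> carrier R" "b \<in> carrier R" "s \<in> S" "t \<in> S"
  shows "loc_mult R S (frac R S a s) (frac R S b t) = loc_mult R S (frac R S b t) (frac R S a s)"
proof -
  have c: "s \<in> carrier R" "t \<in> carrier R" using assms S_carr by auto
  show ?thesis using assms c one_S
  apply (simp add: loc_add_frac loc_mult_frac S_mult S_carr)
  apply (rule frac_eqI)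
  apply (simp add: S_mult S_carr; fail)+
  apply (insert c assms(1-2))
  apply algebra
  done
qed

lemma f_neg: assumes "a \<in> carrier R" "s \<in> S"
  shows "loc_add R S (frac R S (\<ominus> a) s) (frac R S a s) = frac R S \<zero> \<one>"
proof -
  have c: "s \<in> carrier R" using assms S_carr by auto
  show ?thesis using assms c one_S
  apply (simp add: loc_add_frac loc_mult_frac S_mult S_carr)
  apply (rule frac_eqI)
  apply (simp add: S_mult S_carr; fail)+
  apply (insert c assms(1-2))
  apply algebra
  done
qed

lemma f_zero_l: "a \<in> carrier R \<Longrightarrow> s \<in> S \<Longrightarrow> loc_add R S (frac R S \<zero> \<one>) (frac R S a s) = frac R S a s"
  using S_carr[of s] one_S by (simp add: loc_add_frac)

lemma f_one_l: "a \<in> carrier R \<Longrightarrow> s \<in> S \<Longrightarrow> loc_mult R S (frac R S \<one> \<one>) (frac R S a s) = frac R S a s"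
  using S_carr[of s] one_S by (simp add: loc_mult_frac)

lemma Loc_cring: "cring (Loc R S)"
proof (rule cringI)
  show "abelian_group (Loc R S)"
  proof (rule abelian_groupI)
    show "\<And>x y. x \<in> carrier (Loc R S) \<Longrightarrow> y \<in> carrier (Loc R S) \<Longrightarrow> x \<oplus>\<^bsub>Loc R S\<^esub> y \<in> carrier (Loc R S)"
      by (auto elim!: Loc_carrierE simp: Loc_simps loc_add_frac S_mult S_carr intro!: frac_carrier)
    show "\<zero>\<^bsub>Loc R S\<^esub> \<in> carrier (Loc R S)" by (auto simp: Loc_simps one_S intro!: frac_carrier)
    show "\<And>x y z. x \<in> carrier (Loc R S) \<Longrightarrow> y \<in> carrier (Loc R S) \<Longrightarrow> z \<in> carrier (Loc R S) \<Longrightarrow>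
       x \<oplus>\<^bsub>Loc R S\<^esub> y \<oplus>\<^bsub>Loc R S\<^esub> z = x \<oplus>\<^bsub>Loc R S\<^esub> (y \<oplus>\<^bsub>Loc R S\<^esub> z)"
      by (auto elim!: Loc_carrierE simp: Loc_simps f_add_assoc)
    show "\<And>x y. x \<in> carrier (Loc R S) \<Longrightarrow> y \<in> carrier (Loc R S) \<Longrightarrow> x \<oplus>\<^bsub>Loc R S\<^esub> y = y \<oplus>\<^bsub>Loc R S\<^esub> x"
      by (auto elim!: Loc_carrierE simp: Loc_simps f_add_comm)
    show "\<And>x. x \<in> carrier (Loc R S) \<Longrightarrow> \<zero>\<^bsub>Loc R S\<^esub> \<oplus>\<^bsub>Loc R S\<^esub> x = x"
      by (auto elim!: Loc_carrierE simp: Loc_simps f_zero_l)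
    show "\<And>x. x \<in> carrier (Loc R S) \<Longrightarrow> \<exists>y\<in>carrier (Loc R S). y \<oplus>\<^bsub>Loc R S\<^esub> x = \<zero>\<^bsub>Loc R S\<^esub>"
    proof -
      fix x assume "x \<in> carrier (Loc R S)"
      then obtain a s where "a \<in> carrier R" "s \<in> S" "x = frac R S a s" by (rule Loc_carrierE)
      then show "\<exists>y\<in>carrier (Loc R S). y \<oplus>\<^bsub>Loc R S\<^esub> x = \<zero>\<^bsub>Loc R S\<^esub>"
        by (intro bexI[of _ "frac R S (\<ominus> a) s"]) (auto simp: Loc_simps f_neg intro!: frac_carrier)
    qed
  qed
  show "comm_monoid (Loc R S)"
  proof (rule comm_monoidI)
    show "\<And>x y. x \<in> carrier (Loc R S) \<Longrightarrow> y \<in> carrier (Loc R S) \<Longrightarrow> x \<otimes>\<^bsub>Loc R S\<^esub> y \<in> carrier (Loc R S)"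
      by (auto elim!: Loc_carrierE simp: Loc_simps loc_mult_frac S_mult S_carr intro!: frac_carrier)
    show "\<one>\<^bsub>Loc R S\<^esub> \<in> carrier (Loc R S)" by (auto simp: Loc_simps one_S intro!: frac_carrier)
    show "\<And>x y z. x \<in> carrier (Loc R S) \<Longrightarrow> y \<in> carrier (Loc R S) \<Longrightarrow> z \<in> carrier (Loc R S) \<Longrightarrow>
       x \<otimes>\<^bsub>Loc R S\<^esub> y \<otimes>\<^bsub>Loc R S\<^esub> z = x \<otimes>\<^bsub>Loc R S\<^esub> (y \<otimes>\<^bsub>Loc R S\<^esub> z)"
      by (auto elim!: Loc_carrierE simp: Loc_simps f_mult_assoc)
    show "\<And>x y. x \<in> carrier (Loc R S) \<Longrightarrow> y \<in> carrier (Loc R S) \<Longrightarrow> x \<otimes>\<^bsub>Loc R S\<^esub> y = y \<otimes>\<^bsub>Loc R S\<^esub> x"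
      by (auto elim!: Loc_carrierE simp: Loc_simps f_mult_comm)
    show "\<And>x. x \<in> carrier (Loc R S) \<Longrightarrow> \<one>\<^bsub>Loc R S\<^esub> \<otimes>\<^bsub>Loc R S\<^esub> x = x"
      by (auto elim!: Loc_carrierE simp: Loc_simps f_one_l)
  qed
  show "\<And>x y z. x \<in> carrier (Loc R S) \<Longrightarrow> y \<in> carrier (Loc R S) \<Longrightarrow> z \<in> carrier (Loc R S) \<Longrightarrow>
       (x \<oplus>\<^bsub>Loc R S\<^esub> y) \<otimes>\<^bsub>Loc R S\<^esub> z = x \<otimes>\<^bsub>Loc R S\<^esub> z \<oplus>\<^bsub>Loc R S\<^esub> y \<otimes>\<^bsub>Loc R S\<^esub> z"
    by (auto elim!: Loc_carrierE simp: Loc_simps f_distr)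
qed


lemma loc_ideal_mem: "x \<in> loc_ideal R S I \<longleftrightarrow> (\<exists>a s. x = frac R S a s \<and> a \<in> I \<and> s \<in> S)"
  by (auto simp: loc_ideal_def)

lemma L_minus: assumes "a \<in> carrier R" "s \<in> S"
  shows "\<ominus>\<^bsub>Loc R S\<^esub> (frac R S a s) = frac R S (\<ominus> a) s"
proof -
  interpret L: cring "Loc R S" by (rule Loc_cring)
  show ?thesis
    by (rule L.minus_equality) (use assms in \<open>auto simp: Loc_simps f_neg intro!: frac_carrier\<close>)
qed

lemma loc_ideal_ideal: assumes I: "ideal I R" shows "ideal (loc_ideal R S I) (Loc R S)"
proof -
  interpret L: cring "Loc R S" by (rule Loc_cring)
  interpret I: ideal I R by (rule I)
  have IC: "\<And>a. a \<in> I \<Longrightarrow> a \<in> carrier R" by (rule I.Icarr)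
  show ?thesis
  proof (rule idealI)
    show "ring (Loc R S)" by (rule L.ring_axioms)
    show "subgroup (loc_ideal R S I) (add_monoid (Loc R S))"
    proof (rule subgroup.intro)
      show "loc_ideal R S I \<subseteq> carrier (add_monoid (Loc R S))"
        by (auto simp: loc_ideal_mem IC intro!: frac_carrier)
      show "\<And>x y. x \<in> loc_ideal R S I \<Longrightarrow> y \<in> loc_ideal R S I \<Longrightarrow> x \<otimes>\<^bsub>add_monoid (Loc R S)\<^esub> y \<in> loc_ideal R S I"
      proof -
        fix x y assume "x \<in> loc_ideal R S I" "y \<in> loc_ideal R S I"
        then obtain a s b t where h: "x = frac R S a s" "a \<in> I" "s \<in> S" "y = frac R S b t" "b \<in> I" "t \<in> S"
          unfolding loc_ideal_mem by blast
        have "a \<otimes> t \<oplus> b \<otimes> s \<in> I" using h S_carr by (intro I.a_closed I.I_r_closed) auto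
        then show "x \<otimes>\<^bsub>add_monoid (Loc R S)\<^esub> y \<in> loc_ideal R S I"
          using h IC by (auto simp: Loc_simps loc_add_frac loc_ideal_mem intro!: S_mult)
      qed
      show "\<one>\<^bsub>add_monoid (Loc R S)\<^esub> \<in> loc_ideal R S I"
      proof -
        have z: "\<zero> \<in> I" by (rule additive_subgroup.zero_closed[OF I.is_additive_subgroup])
        show ?thesis apply (simp add: Loc_simps loc_ideal_mem) using z one_S by blast
      qed
      show "\<And>x. x \<in> loc_ideal R S I \<Longrightarrow> inv\<^bsub>add_monoid (Loc R S)\<^esub> x \<in> loc_ideal R S I"
      proof -
        fix x assume "x \<in> loc_ideal R S I"
        then obtain a s where h: "x = frac R S a s" "a \<in> I" "s \<in> S"
          unfolding loc_ideal_mem by blast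
        have "inv\<^bsub>add_monoid (Loc R S)\<^esub> x = \<ominus>\<^bsub>Loc R S\<^esub> x" by (simp add: a_inv_def)
        also have "\<dots> = frac R S (\<ominus> a) s" using h IC L_minus by auto
        finally show "inv\<^bsub>add_monoid (Loc R S)\<^esub> x \<in> loc_ideal R S I"
          using h by (auto simp: loc_ideal_mem)
      qed
    qed
    show "\<And>a x. a \<in> loc_ideal R S I \<Longrightarrow> x \<in> carrier (Loc R S) \<Longrightarrow> x \<otimes>\<^bsub>Loc R S\<^esub> a \<in> loc_ideal R S I"
    proof -
      fix x y assume "y \<in> loc_ideal R S I" "x \<in> carrier (Loc R S)"
      then obtain a s b t where h: "y = frac R S a s" "a \<in> I" "s \<in> S" "x = frac R S b t" "b \<in> carrier R" "t \<in> S"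
        unfolding loc_ideal_mem by (blast elim: Loc_carrierE)
      have "b \<otimes> a \<in> I" using h by (intro I.I_l_closed) auto
      then show "x \<otimes>\<^bsub>Loc R S\<^esub> y \<in> loc_ideal R S I"
        using h IC by (auto simp: Loc_simps loc_mult_frac loc_ideal_mem intro!: S_mult)
    qed
    show "\<And>a x. a \<in> loc_ideal R S I \<Longrightarrow> x \<in> carrier (Loc R S) \<Longrightarrow> a \<otimes>\<^bsub>Loc R S\<^esub> x \<in> loc_ideal R S I"
    proof -
      fix x y assume "y \<in> loc_ideal R S I" "x \<in> carrier (Loc R S)"
      then obtain a s b t where h: "y = frac R S a s" "a \<in> I" "s \<in> S" "x = frac R S b t" "b \<in> carrier R" "t \<in> S"
        unfolding loc_ideal_mem by (blast elim: Loc_carrierE)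
      have "a \<otimes> b \<in> I" using h by (intro I.I_r_closed) auto
      then show "y \<otimes>\<^bsub>Loc R S\<^esub> x \<in> loc_ideal R S I"
        using h IC by (auto simp: Loc_simps loc_mult_frac loc_ideal_mem intro!: S_mult)
    qed
  qed
qed

lemma pow_S: "s \<in> S \<Longrightarrow> s [^] (n::nat) \<in> S"
  by (induction n) (auto simp: one_S S_mult)

lemma frac_pow: "a \<in> carrier R \<Longrightarrow> s \<in> S \<Longrightarrow>
   (frac R S a s) [^]\<^bsub>Loc R S\<^esub> (n::nat) = frac R S (a [^] n) (s [^] n)"
  by (induction n) (auto simp: Loc_simps loc_mult_frac pow_S)

lemma frac_zero: "s \<in> S \<Longrightarrow> frac R S \<zero> s = frac R S \<zero> \<one>"
  by (rule frac_eqI) (auto simp: one_S S_carr)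

lemma main:
  fixes \<delta> :: "'a set \<Rightarrow> 'a set" and \<delta>S :: "('a \<times> 'a) set set \<Rightarrow> ('a \<times> 'a) set set"
    and I :: "'a set"
  assumes "cring R" and "\<one>\<^bsub>R\<^esub> \<noteq> \<zero>\<^bsub>R\<^esub>"
    and "mult_closed R S"
    and "expansion R \<delta>"
    and "expansion (Loc R S) \<delta>S"
    and "\<forall>J. ideal J R \<longrightarrow> \<delta>S (loc_ideal R S J) = loc_ideal R S (\<delta> J)"
    and "ideal I R"
  shows "(delta_n_ideal R \<delta> I \<and> I \<inter> S = {} \<longrightarrow> delta_n_ideal (Loc R S) \<delta>S (loc_ideal R S I))
       \<and> (S \<inter> zero_divs R = {} \<and> S \<inter> zero_divs_mod R (\<delta> I) = {}
            \<and> delta_n_ideal (Loc R S) \<delta>S (loc_ideal R S I) \<longrightarrow> delta_n_ideal R \<delta> I)"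
proof -
  interpret L: cring "Loc R S" by (rule Loc_cring)
  interpret I: ideal I R by (rule assms(7))
  have dI: "ideal (\<delta> I) R" using assms(4,7) by (simp add: expansion_def)
  interpret dI: ideal "\<delta> I" R by (rule dI)
  have dS: "\<delta>S (loc_ideal R S I) = loc_ideal R S (\<delta> I)" using assms(6,7) by blast
  have P1: "delta_n_ideal (Loc R S) \<delta>S (loc_ideal R S I)"
    if dn: "delta_n_ideal R \<delta> I" and disj: "I \<inter> S = {}"
  proof -
    have "loc_ideal R S I \<noteq> carrier (Loc R S)"
    proof
      assume eq: "loc_ideal R S I = carrier (Loc R S)"
      have "frac R S \<one> \<one> \<in> carrier (Loc R S)" using one_S by (intro frac_carrier) auto
      then obtain a s where h: "frac R S \<one> \<one> = frac R S a s" "a \<in> I" "s \<in> S"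
        unfolding eq[symmetric] loc_ideal_mem by blast
      have ac: "a \<in> carrier R" "s \<in> carrier R" using h I.Icarr S_carr by auto
      have "((\<one>, \<one>), (a, s)) \<in> loc_rel R S" using h(1) one_S ac h(3) frac_eq[of "\<one>" a "\<one>" s] by simp
      then obtain u where u: "u \<in> S" "u \<otimes> ((s \<otimes> \<one>) \<ominus> (\<one> \<otimes> a)) = \<zero>"
        unfolding rel_iff by blast
      have uc: "u \<in> carrier R" using u S_carr by auto
      have "u \<otimes> s = u \<otimes> ((s \<otimes> \<one>) \<ominus> (\<one> \<otimes> a)) \<oplus> u \<otimes> a" using ac uc by algebra
      also have "\<dots> = u \<otimes> a" using u ac uc by simp
      finally have "u \<otimes> s \<in> I" using I.I_l_closed[OF h(2) uc] by simp
      moreover have "u \<otimes> s \<in> S" using u h S_mult by auto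
      ultimately show False using disj by blast
    qed
    moreover have "\<forall>x\<in>carrier (Loc R S). \<forall>y\<in>carrier (Loc R S). x \<otimes>\<^bsub>Loc R S\<^esub> y \<in> loc_ideal R S I \<longrightarrow>
        x \<notin> nilrad (Loc R S) \<longrightarrow> y \<in> \<delta>S (loc_ideal R S I)"
    proof (intro ballI impI)
      fix x y assume x: "x \<in> carrier (Loc R S)" and y: "y \<in> carrier (Loc R S)"
        and xy: "x \<otimes>\<^bsub>Loc R S\<^esub> y \<in> loc_ideal R S I" and xn: "x \<notin> nilrad (Loc R S)"
      obtain a s where a: "a \<in> carrier R" "s \<in> S" "x = frac R S a s" using x by (rule Loc_carrierE)
      obtain b t where b: "b \<in> carrier R" "t \<in> S" "y = frac R S b t" using y by (rule Loc_carrierE)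
      have "frac R S (a \<otimes> b) (s \<otimes> t) \<in> loc_ideal R S I" using xy a b by (simp add: Loc_simps loc_mult_frac)
      then obtain c v where c: "frac R S (a \<otimes> b) (s \<otimes> t) = frac R S c v" "c \<in> I" "v \<in> S"
        unfolding loc_ideal_mem by blast
      have cc: "c \<in> carrier R" using c I.Icarr by auto
      have "((a \<otimes> b, s \<otimes> t), (c, v)) \<in> loc_rel R S"
        using c(1) frac_eq[of "a \<otimes> b" c "s \<otimes> t" v] a b cc c(3) S_mult by simp
      then obtain u where u: "u \<in> S" "u \<otimes> ((v \<otimes> (a \<otimes> b)) \<ominus> ((s \<otimes> t) \<otimes> c)) = \<zero>"
        unfolding rel_iff by blast
      have sc: "s \<in> carrier R" "t \<in> carrier R" "u \<in> carrier R" "v \<in> carrier R" using a b u c S_carr by auto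
      have "a \<otimes> (u \<otimes> v \<otimes> b) = u \<otimes> ((v \<otimes> (a \<otimes> b)) \<ominus> ((s \<otimes> t) \<otimes> c)) \<oplus> (u \<otimes> s \<otimes> t) \<otimes> c"
        using a(1) b(1) cc sc by algebra
      also have "\<dots> = (u \<otimes> s \<otimes> t) \<otimes> c" using u cc sc by simp
      finally have abI: "a \<otimes> (u \<otimes> v \<otimes> b) \<in> I" using I.I_l_closed[OF c(2)] sc by simp
      have an: "a \<notin> nilrad R"
      proof
        assume "a \<in> nilrad R"
        then obtain n :: nat where "a [^] n = \<zero>" unfolding nilrad_def by blast
        then have "x [^]\<^bsub>Loc R S\<^esub> n = \<zero>\<^bsub>Loc R S\<^esub>"
          using a by (simp add: frac_pow Loc_simps frac_zero pow_S)
        then show False using xn x unfolding nilrad_def by blast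
      qed
      have "\<forall>a\<in>carrier R. \<forall>b\<in>carrier R. a \<otimes> b \<in> I \<longrightarrow> a \<notin> nilrad R \<longrightarrow> b \<in> \<delta> I"
        using dn unfolding delta_n_ideal_def by blast
      moreover have "u \<otimes> v \<otimes> b \<in> carrier R" using sc b by simp
      ultimately have "u \<otimes> v \<otimes> b \<in> \<delta> I" using abI an a(1) by blast
      moreover have "y = frac R S (u \<otimes> v \<otimes> b) (u \<otimes> v \<otimes> t)"
        unfolding b(3) proof (rule frac_eqI)
        show "(u \<otimes> v \<otimes> t) \<otimes> b = t \<otimes> (u \<otimes> v \<otimes> b)" using b(1) sc by algebra
      qed (use b sc u c S_mult in auto)
      moreover have "u \<otimes> v \<otimes> t \<in> S" using u c b S_mult by auto
      ultimately show "y \<in> \<delta>S (loc_ideal R S I)" unfolding dS loc_ideal_mem by blast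
    qed
    ultimately show ?thesis unfolding delta_n_ideal_def using loc_ideal_ideal[OF assms(7)] by blast
  qed
  have P2: "delta_n_ideal R \<delta> I"
    if SZ: "S \<inter> zero_divs R = {}" and SZd: "S \<inter> zero_divs_mod R (\<delta> I) = {}"
     and dL: "delta_n_ideal (Loc R S) \<delta>S (loc_ideal R S I)"
  proof -
    have "I \<noteq> carrier R"
    proof
      assume "I = carrier R"
      then have "loc_ideal R S I = carrier (Loc R S)" by (simp add: loc_ideal_def Loc_carrier)
      then show False using dL unfolding delta_n_ideal_def by blast
    qed
    moreover have "\<forall>a\<in>carrier R. \<forall>b\<in>carrier R. a \<otimes> b \<in> I \<longrightarrow> a \<notin> nilrad R \<longrightarrow> b \<in> \<delta> I"
    proof (intro ballI impI)
      fix a b assume a: "a \<in> carrier R" and b: "b \<in> carrier R" and ab: "a \<otimes> b \<in> I" and an: "a \<notin> nilrad R"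
      have xy: "frac R S a \<one> \<otimes>\<^bsub>Loc R S\<^esub> frac R S b \<one> \<in> loc_ideal R S I"
        using a b ab one_S by (auto simp: Loc_simps loc_mult_frac loc_ideal_mem)
      have xn: "frac R S a \<one> \<notin> nilrad (Loc R S)"
      proof
        assume "frac R S a \<one> \<in> nilrad (Loc R S)"
        then obtain n :: nat where "frac R S a \<one> [^]\<^bsub>Loc R S\<^esub> n = \<zero>\<^bsub>Loc R S\<^esub>" unfolding nilrad_def by blast
        then have "frac R S (a [^] n) \<one> = frac R S \<zero> \<one>" using a one_S by (simp add: frac_pow Loc_simps)
        then have "((a [^] n, \<one>), (\<zero>, \<one>)) \<in> loc_rel R S"
          using frac_eq[of "a [^] n" "\<zero>" "\<one>" "\<one>"] a one_S by simp
        then obtain u where u: "u \<in> S" "u \<otimes> ((\<one> \<otimes> (a [^] n)) \<ominus> (\<one> \<otimes> \<zero>)) = \<zero>"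
          unfolding rel_iff by blast
        have uc: "u \<in> carrier R" using u S_carr by auto
        have "u \<otimes> (a [^] n) = u \<otimes> ((\<one> \<otimes> (a [^] n)) \<ominus> (\<one> \<otimes> \<zero>))" using uc a by (simp add: minus_eq)
        also have "\<dots> = \<zero>" by (rule u(2))
        finally have "u \<otimes> (a [^] n) = \<zero>" .
        moreover have "a [^] n \<noteq> \<zero>" using an a unfolding nilrad_def by blast
        ultimately have "u \<in> zero_divs R" unfolding zero_divs_def using uc a by auto
        then show False using SZ u by blast
      qed
      have xc: "frac R S a \<one> \<in> carrier (Loc R S)" "frac R S b \<one> \<in> carrier (Loc R S)"
        using a b one_S by (auto intro!: frac_carrier)
      have "\<forall>x\<in>carrier (Loc R S). \<forall>y\<in>carrier (Loc R S). x \<otimes>\<^bsub>Loc R S\<^esub> y \<in> loc_ideal R S I \<longrightarrow>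
        x \<notin> nilrad (Loc R S) \<longrightarrow> y \<in> \<delta>S (loc_ideal R S I)" using dL unfolding delta_n_ideal_def by blast
      then have "frac R S b \<one> \<in> \<delta>S (loc_ideal R S I)" using xc xy xn by blast
      then have "frac R S b \<one> \<in> loc_ideal R S (\<delta> I)" unfolding dS .
      then obtain c v where c: "frac R S b \<one> = frac R S c v" "c \<in> \<delta> I" "v \<in> S"
        unfolding loc_ideal_mem by blast
      have cc: "c \<in> carrier R" using c dI.Icarr by auto
      have "((b, \<one>), (c, v)) \<in> loc_rel R S" using c(1) frac_eq[of b c "\<one>" v] b cc c(3) one_S by simp
      then obtain u where u: "u \<in> S" "u \<otimes> ((v \<otimes> b) \<ominus> (\<one> \<otimes> c)) = \<zero>"
        unfolding rel_iff by blast
      have sc: "u \<in> carrier R" "v \<in> carrier R" using u c S_carr by auto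
      have "(u \<otimes> v) \<otimes> b = u \<otimes> ((v \<otimes> b) \<ominus> (\<one> \<otimes> c)) \<oplus> u \<otimes> c" using b cc sc by algebra
      also have "\<dots> = u \<otimes> c" using u cc sc by simp
      finally have "(u \<otimes> v) \<otimes> b \<in> \<delta> I" using dI.I_l_closed[OF c(2)] sc by simp
      moreover have "u \<otimes> v \<in> S" using u c S_mult by auto
      ultimately show "b \<in> \<delta> I" using SZd b sc unfolding zero_divs_mod_def by blast
    qed
    ultimately show ?thesis unfolding delta_n_ideal_def using assms(7) by blast
  qed
  show ?thesis using P1 P2 by blast
qed

end

theorem proposition2p24:
  fixes R :: "('a, 'b) ring_scheme" and S :: "'a set"
    and \<delta> :: "'a set \<Rightarrow> 'a set" and \<delta>S :: "('a \<times> 'a) set set \<Rightarrow> ('a \<times> 'a) set set"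
    and I :: "'a set"
  assumes "cring R" and "\<one>\<^bsub>R\<^esub> \<noteq> \<zero>\<^bsub>R\<^esub>"
    and "mult_closed R S"
    and "expansion R \<delta>"
    and "expansion (Loc R S) \<delta>S"
    and "\<forall>J. ideal J R \<longrightarrow> \<delta>S (loc_ideal R S J) = loc_ideal R S (\<delta> J)"
    and "ideal I R"
  shows "(delta_n_ideal R \<delta> I \<and> I \<inter> S = {} \<longrightarrow> delta_n_ideal (Loc R S) \<delta>S (loc_ideal R S I))
       \<and> (S \<inter> zero_divs R = {} \<and> S \<inter> zero_divs_mod R (\<delta> I) = {}
            \<and> delta_n_ideal (Loc R S) \<delta>S (loc_ideal R S I) \<longrightarrow> delta_n_ideal R \<delta> I)"
proof -
  interpret lctx R S using assms(1,3) by (simp add: lctx_def lctx_axioms_def cring_def)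
  show ?thesis by (rule main[OF assms])
qed

end
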